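(* For every integer $3 \leqslant \ell \leqslant n$ and $p \in (0,1)$ with $p\ell^2 \leqslant 1$, $$\left(\frac{1}{2\mathrm{e}^2}\right)^{\ell}(\ell p)^{2\ell-3} \,\leqslant\, P(\ell,p) \,\leqslant\, 4^3\left(\frac{\mathrm{e}}{4}\right)^{2\ell}(\ell p)^{2\ell-3}.$$
   Context: $\mathrm{e}$ is Euler's number. For a graph $G$ on $[n]$ and a clique $K \subset K_n$, $K$ is internally spanned by $G$ if $\langle G \cap K\rangle_{K_4} = K$, where $\langle \cdot \rangle_{K_4}$ is the closure under the $K_4$-bootstrap process (repeatedly add any edge which is the only missing edge of a copy of $K_4$) and $G \cap K$ is the set of edges of $G$ with both endpoints in $V(K)$. $P(\ell,p)$ is the probability that a fixed copy of $K_\ell$ in $K_n$ is internally spanned by the Erdős–Rényi random graph $G_{n,p}$. *)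

theory Defs
  imports Complex_Main
begin

definition Kn_edges :: "nat \<Rightarrow> nat set set" where
  "Kn_edges n = {e. e \<subseteq> {1..n} \<and> card e = 2}"

definition clique_edges :: "nat set \<Rightarrow> nat set set" where
  "clique_edges S = {e. e \<subseteq> S \<and> card e = 2}"

inductive_set k4_closure :: "nat set set \<Rightarrow> nat set set" for H :: "nat set set" where
  base: "e \<in> H \<Longrightarrow> e \<in> k4_closure H"
| step: "\<lbrakk> distinct [u, v, w, x];
           {u, w} \<in> k4_closure H; {u, x} \<in> k4_closure H;
           {v, w} \<in> k4_closure H; {v, x} \<in> k4_closure H;
           {w, x} \<in> k4_closure H \<rbrakk> \<Longrightarrow> {u, v} \<in> k4_closure H"

definition internally_spanned :: "nat set set \<Rightarrow> nat set \<Rightarrow> bool" where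
  "internally_spanned G S \<longleftrightarrow> k4_closure {e \<in> G. e \<subseteq> S} = clique_edges S"

definition P_span :: "nat \<Rightarrow> nat set \<Rightarrow> real \<Rightarrow> real" where
  "P_span n S p = (\<Sum>G \<in> Pow (Kn_edges n).
      (if internally_spanned G S then p ^ card G * (1 - p) ^ (card (Kn_edges n) - card G) else 0))"

end

theory Submission
  imports Defs "HOL-Library.FuncSet"
begin

definition wt :: "real \<Rightarrow> 'a set \<Rightarrow> 'a set \<Rightarrow> real" where
  "wt p A H = p ^ card H * (1 - p) ^ (card A - card H)"

lemma W1:
  fixes p :: real
  assumes "finite A"
  shows "(\<Sum>R\<in>Pow A. wt p A R) = 1"
  using assms
proof (induction A rule: finite_induct)
  case empty
  then show ?case by (simp add: wt_def)
next
  case (insert a A)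
  have fin: "finite (Pow A)" using insert by simp
  have disj: "Pow A \<inter> insert a ` Pow A = {}" using insert by auto
  have inj: "inj_on (insert a) (Pow A)" using insert unfolding inj_on_def by (metis Diff_insert_absorb PowD subsetD)
  have c1: "R \<in> Pow A \<Longrightarrow> wt p (insert a A) R = (1 - p) * wt p A R" for R
  proof -
    assume R: "R \<in> Pow A"
    then have "card R \<le> card A" using insert by (simp add: card_mono)
    then have "card (insert a A) - card R = Suc (card A - card R)" using insert by simp
    then show ?thesis by (simp add: wt_def)
  qed
  have c2: "R \<in> Pow A \<Longrightarrow> wt p (insert a A) (insert a R) = p * wt p A R" for R
  proof -
    assume R: "R \<in> Pow A"
    then have fR: "finite R" and aR: "a \<notin> R" using insert finite_subset by auto
    then have "card R \<le> card A" using R insert by (simp add: card_mono)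
    then have "card (insert a A) - card (insert a R) = card A - card R" using insert fR aR by simp
    then show ?thesis using fR aR by (simp add: wt_def)
  qed
  have "(\<Sum>R\<in>Pow (insert a A). wt p (insert a A) R)
      = (\<Sum>R\<in>Pow A. wt p (insert a A) R) + (\<Sum>R\<in>insert a ` Pow A. wt p (insert a A) R)"
    unfolding Pow_insert by (rule sum.union_disjoint) (use fin disj in auto)
  also have "(\<Sum>R\<in>insert a ` Pow A. wt p (insert a A) R) = (\<Sum>R\<in>Pow A. wt p (insert a A) (insert a R))"
    by (rule sum.reindex[OF inj, unfolded comp_def])
  also have "\<dots> = p * (\<Sum>R\<in>Pow A. wt p A R)" using c2 by (simp add: sum_distrib_left)
  also have "(\<Sum>R\<in>Pow A. wt p (insert a A) R) = (1 - p) * (\<Sum>R\<in>Pow A. wt p A R)"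
    using c1 by (simp add: sum_distrib_left)
  finally show ?case using insert by simp
qed

lemma M:
  fixes p :: real
  assumes "finite E" "K \<subseteq> E" "H \<subseteq> K"
  shows "(\<Sum>G\<in>{G\<in>Pow E. G \<inter> K = H}. wt p E G) = wt p K H"
proof -
  have fK: "finite K" using assms finite_subset by auto
  have fEK: "finite (E - K)" using assms by simp
  have img: "{G\<in>Pow E. G \<inter> K = H} = (\<lambda>R. H \<union> R) ` Pow (E - K)"
  proof
    show "{G\<in>Pow E. G \<inter> K = H} \<subseteq> (\<lambda>R. H \<union> R) ` Pow (E - K)"
    proof
      fix G assume "G \<in> {G\<in>Pow E. G \<inter> K = H}"
      then have "G = H \<union> (G - K)" "G - K \<in> Pow (E - K)" by auto
      then show "G \<in> (\<lambda>R. H \<union> R) ` Pow (E - K)" by blast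
    qed
  qed (use assms in auto)
  have inj: "inj_on (\<lambda>R. H \<union> R) (Pow (E - K))"
    unfolding inj_on_def using assms by blast
  have eq: "wt p E (H \<union> R) = wt p K H * wt p (E - K) R" if R: "R \<in> Pow (E - K)" for R
  proof -
    have fH: "finite H" using fK assms finite_subset by auto
    have fR: "finite R" using R fEK finite_subset by auto
    have d: "H \<inter> R = {}" using R assms by auto
    have cu: "card (H \<union> R) = card H + card R" using card_Un_disjoint[OF fH fR d] .
    have cE: "card E = card K + card (E - K)"
      using card_Diff_subset[OF fK assms(2)] card_mono[OF assms(1,2)] by simp
    have "card H \<le> card K" using card_mono[OF fK assms(3)] .
    moreover have "card R \<le> card (E - K)" using card_mono[OF fEK] R by auto
    ultimately have "card E - card (H \<union> R) = (card K - card H) + (card (E - K) - card R)"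
      using cu cE by simp
    then show ?thesis unfolding wt_def using cu by (simp add: power_add)
  qed
  have "(\<Sum>G\<in>{G\<in>Pow E. G \<inter> K = H}. wt p E G) = (\<Sum>R\<in>Pow (E - K). wt p E (H \<union> R))"
    unfolding img by (rule sum.reindex[OF inj, unfolded comp_def])
  also have "\<dots> = (\<Sum>R\<in>Pow (E - K). wt p K H * wt p (E - K) R)" using eq by simp
  also have "\<dots> = wt p K H" using W1[OF fEK] by (simp add: sum_distrib_left[symmetric])
  finally show ?thesis .
qed

definition EF :: "nat set set \<Rightarrow> nat set set" where
  "EF F = (\<Union>C\<in>F. clique_edges C)"

definition phi :: "nat set set \<Rightarrow> int" where
  "phi F = (\<Sum>C\<in>F. 2 * int (card C) - 3)"

definition good :: "nat set set \<Rightarrow> bool" where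
  "good F \<longleftrightarrow> finite F \<and> (\<forall>C\<in>F. finite C \<and> 2 \<le> card C)
     \<and> (\<forall>A\<in>F. \<forall>B\<in>F. A \<noteq> B \<longrightarrow> card (A \<inter> B) \<le> 1)
     \<and> (\<forall>x y z. x \<noteq> y \<and> y \<noteq> z \<and> x \<noteq> z \<and> {x,y} \<in> EF F \<and> {y,z} \<in> EF F \<and> {x,z} \<in> EF F
          \<longrightarrow> (\<exists>C\<in>F. x \<in> C \<and> y \<in> C \<and> z \<in> C))"

lemma pair_in_clique: "x \<noteq> y \<Longrightarrow> {x,y} \<in> clique_edges C \<longleftrightarrow> x \<in> C \<and> y \<in> C"
  unfolding clique_edges_def by auto

lemma pair_in_EF: "x \<noteq> y \<Longrightarrow> {x,y} \<in> EF F \<longleftrightarrow> (\<exists>C\<in>F. x \<in> C \<and> y \<in> C)"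
  unfolding EF_def using pair_in_clique by blast

lemma good_tri:
  assumes "good F" "x \<noteq> y" "y \<noteq> z" "x \<noteq> z" "{x,y} \<in> EF F" "{y,z} \<in> EF F" "{x,z} \<in> EF F"
  shows "\<exists>C\<in>F. x \<in> C \<and> y \<in> C \<and> z \<in> C"
proof -
  have T: "\<forall>x y z. x \<noteq> y \<and> y \<noteq> z \<and> x \<noteq> z \<and> {x,y} \<in> EF F \<and> {y,z} \<in> EF F \<and> {x,z} \<in> EF F
          \<longrightarrow> (\<exists>C\<in>F. x \<in> C \<and> y \<in> C \<and> z \<in> C)"
    using assms(1) unfolding good_def by (elim conjE) assumption
  show ?thesis by (rule T[rule_format]) (use assms(2-7) in blast)
qed

lemma good_pair:
  assumes "good F" "A \<in> F" "B \<in> F" "A \<noteq> B"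
  shows "card (A \<inter> B) \<le> 1"
proof -
  have T: "\<forall>A\<in>F. \<forall>B\<in>F. A \<noteq> B \<longrightarrow> card (A \<inter> B) \<le> 1"
    using assms(1) unfolding good_def by (elim conjE) assumption
  show ?thesis using T assms(2-4) by blast
qed

lemma good_fin: "good F \<Longrightarrow> finite F"
  unfolding good_def by (elim conjE) assumption

lemma good_mem:
  assumes "good F" "C \<in> F"
  shows "finite C" "2 \<le> card C"
proof -
  have T: "\<forall>C\<in>F. finite C \<and> 2 \<le> card C"
    using assms(1) unfolding good_def by (elim conjE) assumption
  show "finite C" "2 \<le> card C" using T assms(2) by auto
qed

lemma same_member:
  assumes "good F" "C \<in> F" "D \<in> F" "w \<in> C" "x \<in> C" "w \<in> D" "x \<in> D" "w \<noteq> x"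
  shows "C = D"
proof (rule ccontr)
  assume "C \<noteq> D"
  then have "card (C \<inter> D) \<le> 1" using good_pair assms by blast
  moreover have "{w,x} \<subseteq> C \<inter> D" using assms by auto
  moreover have "finite (C \<inter> D)" using good_mem(1)[OF assms(1,2)] by simp
  ultimately have "card {w,x} \<le> card (C \<inter> D)" by (intro card_mono) auto
  then show False using \<open>card (C \<inter> D) \<le> 1\<close> assms(8) by simp
qed

lemma closure_sub:
  assumes "good F" "H \<subseteq> EF F"
  shows "k4_closure H \<subseteq> EF F"
proof
  fix e assume "e \<in> k4_closure H"
  then show "e \<in> EF F"
  proof (induction rule: k4_closure.induct)
    case (base e) then show ?case using assms by auto
  next
    case (step u v w x)
    have d: "u \<noteq> v" "u \<noteq> w" "u \<noteq> x" "v \<noteq> w" "v \<noteq> x" "w \<noteq> x" using step(1) by auto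
    obtain C where C: "C \<in> F" "u \<in> C" "w \<in> C" "x \<in> C"
      using good_tri[OF assms(1) d(2) d(6) d(3)] step by blast
    obtain D where D: "D \<in> F" "v \<in> D" "w \<in> D" "x \<in> D"
      using good_tri[OF assms(1) d(4) d(6) d(5)] step by blast
    have "C = D" using same_member[OF assms(1) C(1) D(1)] C D d by blast
    then show ?case using pair_in_EF[OF d(1)] C D by blast
  qed
qed

lemma clique_edges_mono: "C \<subseteq> D \<Longrightarrow> clique_edges C \<subseteq> clique_edges D"
  unfolding clique_edges_def by auto

lemma phi_merge:
  assumes "finite F" "R \<subseteq> F" "0 \<le> 2 * int (card X) - 3"
  shows "phi (insert X (F - R)) \<le> phi F - phi R + (2 * int (card X) - 3)"
proof -
  have "phi F = phi (F - R) + phi R"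
    unfolding phi_def using sum.subset_diff[OF assms(2,1)] by simp
  moreover have "phi (insert X (F - R)) \<le> phi (F - R) + (2 * int (card X) - 3)"
    unfolding phi_def using assms(1,3) by (simp add: sum.insert_if)
  ultimately show ?thesis by simp
qed

lemma EF_merge:
  assumes "R \<subseteq> F" "\<forall>C\<in>R. C \<subseteq> X"
  shows "EF F \<subseteq> EF (insert X (F - R))"
proof
  fix e assume "e \<in> EF F"
  then obtain C where C: "C \<in> F" "e \<in> clique_edges C" unfolding EF_def by blast
  show "e \<in> EF (insert X (F - R))"
  proof (cases "C \<in> R")
    case True
    then have "e \<in> clique_edges X" using clique_edges_mono[of C X] assms(2) C(2) by blast
    then show ?thesis unfolding EF_def by blast
  next
    case False
    then show ?thesis using C unfolding EF_def by blast
  qed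
qed

lemma fix_family:
  assumes "finite F" "\<forall>C\<in>F. finite C \<and> 2 \<le> card C"
  shows "\<exists>G. good G \<and> EF F \<subseteq> EF G \<and> phi G \<le> phi F"
  using assms
proof (induction "card F" arbitrary: F rule: less_induct)
  case less
  show ?case
  proof (cases "\<exists>A\<in>F. \<exists>B\<in>F. A \<noteq> B \<and> \<not> card (A \<inter> B) \<le> 1")
    case True
    then obtain A B where AB0: "A \<in> F" "B \<in> F" "A \<noteq> B" "\<not> card (A \<inter> B) \<le> 1" by blast
    then have AB: "A \<in> F" "B \<in> F" "A \<noteq> B" "2 \<le> card (A \<inter> B)" by auto
    define F' where "F' = insert (A \<union> B) (F - {A,B})"
    have fA: "finite A" "2 \<le> card A" and fB: "finite B" "2 \<le> card B" using less.prems AB by auto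
    have cu: "card (A \<union> B) + card (A \<inter> B) = card A + card B" using card_Un_Int[OF fA(1) fB(1)] by simp
    have fin: "finite F'" using less.prems unfolding F'_def by simp
    have cAB: "card A \<le> card (A \<union> B)" using fA fB card_mono[of "A \<union> B" A] by simp
    then have mem: "\<forall>C\<in>F'. finite C \<and> 2 \<le> card C"
      using less.prems fA fB unfolding F'_def by auto
    have "card (F - {A,B}) = card F - 2" using AB less.prems by (simp add: card_Diff_subset)
    moreover have "card F \<ge> 2" using AB less.prems card_mono[of F "{A,B}"] by simp
    moreover have "card F' \<le> Suc (card (F - {A,B}))" unfolding F'_def using less.prems by (simp add: card_insert_if)
    ultimately have lt: "card F' < card F" by linarith
    obtain G where G: "good G" "EF F' \<subseteq> EF G" "phi G \<le> phi F'" using less.hyps[OF lt fin mem] by blast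
    have "EF F \<subseteq> EF F'" unfolding F'_def by (rule EF_merge) (use AB in auto)
    moreover have "phi F' \<le> phi F"
    proof -
      have "phi F' \<le> phi F - phi {A,B} + (2 * int (card (A \<union> B)) - 3)"
        unfolding F'_def by (rule phi_merge) (use less.prems AB cAB fA in auto)
      moreover have "phi {A,B} = (2 * int (card A) - 3) + (2 * int (card B) - 3)"
        unfolding phi_def using AB by simp
      ultimately show ?thesis using cu AB by linarith
    qed
    ultimately have "EF F \<subseteq> EF G" "phi G \<le> phi F" using G by auto
    then show ?thesis using G(1) by blast
  next
    case nc: False
    show ?thesis
    proof (cases "\<exists>x y z. x \<noteq> y \<and> y \<noteq> z \<and> x \<noteq> z \<and> {x,y} \<in> EF F \<and> {y,z} \<in> EF F \<and> {x,z} \<in> EF F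
          \<and> \<not> (\<exists>C\<in>F. x \<in> C \<and> y \<in> C \<and> z \<in> C)")
      case True
      then obtain x y z where xyz: "x \<noteq> y" "y \<noteq> z" "x \<noteq> z" "{x,y} \<in> EF F" "{y,z} \<in> EF F" "{x,z} \<in> EF F"
        and no: "\<not> (\<exists>C\<in>F. x \<in> C \<and> y \<in> C \<and> z \<in> C)" by blast
      obtain A where A: "A \<in> F" "x \<in> A" "y \<in> A" using pair_in_EF[OF xyz(1)] xyz(4) by blast
      obtain B where B: "B \<in> F" "y \<in> B" "z \<in> B" using pair_in_EF[OF xyz(2)] xyz(5) by blast
      obtain C where C: "C \<in> F" "x \<in> C" "z \<in> C" using pair_in_EF[OF xyz(3)] xyz(6) by blast
      have ne1: "A \<noteq> B" using A B no by blast
      have ne2: "A \<noteq> C" using A C no by blast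
      have ne3: "B \<noteq> C" using B C no by blast
      note ne = ne1 ne2 ne3
      have fA: "finite A" "2 \<le> card A" and fB: "finite B" "2 \<le> card B"
        and fC: "finite C" "2 \<le> card C" using less.prems A B C by auto
      have c1: "card (A \<union> B) + card (A \<inter> B) = card A + card B" using card_Un_Int[OF fA(1) fB(1)] by simp
      have c2: "card (A \<union> B \<union> C) + card ((A \<union> B) \<inter> C) = card (A \<union> B) + card C"
        using card_Un_Int[of "A \<union> B" C] fA fB fC by simp
      have "{y} \<subseteq> A \<inter> B" using A B by auto
      then have i1: "1 \<le> card (A \<inter> B)" using fA card_mono[of "A \<inter> B" "{y}"] by simp
      have "{x,z} \<subseteq> (A \<union> B) \<inter> C" using A B C by auto
      then have i2: "2 \<le> card ((A \<union> B) \<inter> C)" using xyz fC card_mono[of "(A \<union> B) \<inter> C" "{x,z}"] by simp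
      define X where "X = A \<union> B \<union> C"
      define F' where "F' = insert X (F - {A,B,C})"
      have cX: "card X + 3 \<le> card A + card B + card C" using c1 c2 i1 i2 unfolding X_def by linarith
      have "card A \<le> card (A \<union> B \<union> C)" using fA fB fC by (intro card_mono) auto
      then have cXge: "2 \<le> card X" unfolding X_def using fA by linarith
      have fin: "finite F'" using less.prems unfolding F'_def by simp
      have fX: "finite X" unfolding X_def using fA fB fC by simp
      have mem: "\<forall>C\<in>F'. finite C \<and> 2 \<le> card C"
        using less.prems fX cXge unfolding F'_def by auto
      have "card (F - {A,B,C}) = card F - 3" using A B C ne less.prems by (simp add: card_Diff_subset)
      moreover have "card F \<ge> 3" using A B C ne less.prems card_mono[of F "{A,B,C}"] by simp
      moreover have "card F' \<le> Suc (card (F - {A,B,C}))" unfolding F'_def using less.prems by (simp add: card_insert_if)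
      ultimately have lt: "card F' < card F" by linarith
      obtain G where G: "good G" "EF F' \<subseteq> EF G" "phi G \<le> phi F'" using less.hyps[OF lt fin mem] by blast
      have "EF F \<subseteq> EF F'" unfolding F'_def by (rule EF_merge) (use A B C in \<open>auto simp: X_def\<close>)
      moreover have "phi F' \<le> phi F"
      proof -
        have "phi F' \<le> phi F - phi {A,B,C} + (2 * int (card X) - 3)"
          unfolding F'_def by (rule phi_merge) (use less.prems A B C cXge in auto)
        moreover have "phi {A,B,C} = (2 * int (card A) - 3) + (2 * int (card B) - 3) + (2 * int (card C) - 3)"
          unfolding phi_def using ne by simp
        ultimately show ?thesis using cX by linarith
      qed
      ultimately have "EF F \<subseteq> EF G" "phi G \<le> phi F" using G by auto
    then show ?thesis using G(1) by blast
    next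
      case False
      have p1: "\<forall>A\<in>F. \<forall>B\<in>F. A \<noteq> B \<longrightarrow> card (A \<inter> B) \<le> 1" using nc by blast
      have p2: "\<forall>x y z. x \<noteq> y \<and> y \<noteq> z \<and> x \<noteq> z \<and> {x,y} \<in> EF F \<and> {y,z} \<in> EF F \<and> {x,z} \<in> EF F
          \<longrightarrow> (\<exists>C\<in>F. x \<in> C \<and> y \<in> C \<and> z \<in> C)" using False by blast
      have "good F" unfolding good_def using p1 p2 less.prems by blast
      then show ?thesis by auto
    qed
  qed
qed

lemma edge_count:
  assumes "finite H" "\<forall>e\<in>H. card e = 2" "S \<subseteq> S'" "clique_edges S \<subseteq> k4_closure H"
    "finite S" "3 \<le> card S"
  shows "2 * card S - 3 \<le> card H"
proof -
  have fe: "\<forall>C\<in>H. finite C \<and> 2 \<le> card C" using assms(2) by (auto intro: card_ge_0_finite)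
  obtain G where G: "good G" "EF H \<subseteq> EF G" "phi G \<le> phi H" using fix_family[OF assms(1) fe] by blast
  have "H \<subseteq> EF H" unfolding EF_def clique_edges_def using assms(2) by auto
  then have "k4_closure H \<subseteq> EF G" using closure_sub[OF G(1)] G(2) by blast
  then have cl: "clique_edges S \<subseteq> EF G" using assms(4) by blast
  obtain a b c where abc: "a \<in> S" "b \<in> S" "c \<in> S" "a \<noteq> b" "b \<noteq> c" "a \<noteq> c"
  proof -
    obtain T where T: "T \<subseteq> S" "card T = 3" using obtain_subset_with_card_n[OF assms(6)] by blast
    then obtain a b c where "T = {a,b,c}" "a \<noteq> b" "b \<noteq> c" "a \<noteq> c" by (auto simp: card_3_iff)
    then show ?thesis using that T by blast
  qed
  have pe: "u \<in> S \<Longrightarrow> v \<in> S \<Longrightarrow> u \<noteq> v \<Longrightarrow> {u,v} \<in> EF G" for u v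
    using cl pair_in_clique by blast
  obtain C where C: "C \<in> G" "a \<in> C" "b \<in> C" "c \<in> C"
    using good_tri[OF G(1) abc(4,5,6) pe[OF abc(1,2,4)] pe[OF abc(2,3,5)] pe[OF abc(1,3,6)]] by blast
  have "S \<subseteq> C"
  proof
    fix s assume s: "s \<in> S"
    show "s \<in> C"
    proof (cases "s = a \<or> s = b")
      case True then show ?thesis using C by auto
    next
      case False
      have sa: "s \<noteq> a" "s \<noteq> b" using False by auto
      obtain D where D: "D \<in> G" "s \<in> D" "a \<in> D" "b \<in> D"
        using good_tri[OF G(1) sa(1) abc(4) sa(2) pe[OF s abc(1) sa(1)] pe[OF abc(1,2,4)] pe[OF s abc(2) sa(2)]] by blast
      have "C = D" using same_member[OF G(1) C(1) D(1)] C D abc by blast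
      then show ?thesis using D by simp
    qed
  qed
  have fC: "finite C" using good_mem(1)[OF G(1) C(1)] .
  have "card S \<le> card C" using card_mono[OF fC \<open>S \<subseteq> C\<close>] .
  moreover have "2 * int (card C) - 3 \<le> phi G"
    unfolding phi_def
  proof (rule member_le_sum[where f = "\<lambda>C. 2 * int (card C) - 3", OF C(1)])
    fix x assume "x \<in> G - {C}"
    then have "2 \<le> card x" using good_mem(2)[OF G(1)] by blast
    then show "0 \<le> 2 * int (card x) - 3" by linarith
  next
    show "finite G" by (rule good_fin[OF G(1)])
  qed
  moreover have "phi H = int (card H)" unfolding phi_def using assms(2) by simp
  ultimately show ?thesis using G(3) assms(6) by linarith
qed

definition Hc :: "(nat \<Rightarrow> nat) \<Rightarrow> nat \<Rightarrow> (nat \<Rightarrow> nat set) \<Rightarrow> nat set set" where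
  "Hc s l c = insert {s 1, s 2} (\<Union>k\<in>{3..l}. (\<lambda>j. {s k, s j}) ` c k)"

definition Idx :: "nat \<Rightarrow> (nat \<Rightarrow> nat set) set" where
  "Idx l = PiE {3..l} (\<lambda>k. {T. T \<subseteq> {1..<k} \<and> card T = 2})"

lemma closure_in_clique:
  assumes "H \<subseteq> clique_edges S"
  shows "k4_closure H \<subseteq> clique_edges S"
proof
  fix e assume "e \<in> k4_closure H"
  then show "e \<in> clique_edges S"
  proof (induction rule: k4_closure.induct)
    case (base e) then show ?case using assms by auto
  next
    case (step u v w x)
    then show ?case unfolding clique_edges_def by auto
  qed
qed

lemma Hc_sub:
  assumes "bij_betw s {1..l} S" "c \<in> Idx l" "3 \<le> l"
  shows "Hc s l c \<subseteq> clique_edges S"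
proof
  have inj: "inj_on s {1..l}" and im: "s ` {1..l} = S" using assms(1) unfolding bij_betw_def by auto
  fix e assume "e \<in> Hc s l c"
  then consider "e = {s 1, s 2}" | k j where "k \<in> {3..l}" "j \<in> c k" "e = {s k, s j}"
    unfolding Hc_def by auto
  then show "e \<in> clique_edges S"
  proof cases
    case 1
    have m12: "(1::nat) \<in> {1..l}" "(2::nat) \<in> {1..l}" using assms(3) by auto
    have "s 1 \<noteq> s 2" using inj_onD[OF inj _ m12] by auto
    moreover have "s 1 \<in> S" "s 2 \<in> S" using im m12 by auto
    ultimately show ?thesis unfolding clique_edges_def using 1 by auto
  next
    case 2
    have "c k \<in> {T. T \<subseteq> {1..<k} \<and> card T = 2}"
      using PiE_mem[OF assms(2)[unfolded Idx_def] 2(1)] .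
    then have j: "1 \<le> j" "j < k" using 2(2) by auto
    have mkj: "k \<in> {1..l}" "j \<in> {1..l}" using 2(1) j by auto
    have "s k \<noteq> s j" using inj_onD[OF inj _ mkj] j by auto
    moreover have "s k \<in> S" "s j \<in> S" using im mkj by auto
    ultimately show ?thesis unfolding clique_edges_def using 2 by auto
  qed
qed

lemma Hc_card:
  assumes "c \<in> Idx l" "3 \<le> l"
  shows "card (Hc s l c) \<le> 2 * l - 3"
proof -
  have ck: "k \<in> {3..l} \<Longrightarrow> finite (c k) \<and> card (c k) = 2" for k
  proof -
    assume k: "k \<in> {3..l}"
    have "c k \<subseteq> {1..<k}" "card (c k) = 2" using assms k unfolding Idx_def by auto
    then show ?thesis using finite_subset by auto
  qed
  have "card (\<Union>k\<in>{3..l}. (\<lambda>j. {s k, s j}) ` c k) \<le> (\<Sum>k\<in>{3..l}. card ((\<lambda>j. {s k, s j}) ` c k))"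
    by (rule card_UN_le) simp
  also have "\<dots> \<le> (\<Sum>k\<in>{3..l}. 2)"
    by (rule sum_mono) (use ck card_image_le in fastforce)
  also have "\<dots> = 2 * (l - 2)" by simp
  finally have u: "card (\<Union>k\<in>{3..l}. (\<lambda>j. {s k, s j}) ` c k) \<le> 2 * (l - 2)" .
  have fu: "finite (\<Union>k\<in>{3..l}. (\<lambda>j. {s k, s j}) ` c k)" using ck by auto
  have "card (Hc s l c) \<le> Suc (card (\<Union>k\<in>{3..l}. (\<lambda>j. {s k, s j}) ` c k))"
    unfolding Hc_def using fu by (simp add: card_insert_if)
  then show ?thesis using u assms(2) by linarith
qed

lemma Hc_recover:
  assumes "bij_betw s {1..l} S" "c \<in> Idx l" "3 \<le> l" "k \<in> {3..l}"
  shows "c k = {j. j \<in> {1..<k} \<and> {s k, s j} \<in> Hc s l c}"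
proof
  have inj: "inj_on s {1..l}" using assms(1) unfolding bij_betw_def by auto
  have ck: "\<And>k. k \<in> {3..l} \<Longrightarrow> c k \<subseteq> {1..<k}" using assms(2) unfolding Idx_def by auto
  show "c k \<subseteq> {j. j \<in> {1..<k} \<and> {s k, s j} \<in> Hc s l c}"
    using ck[OF assms(4)] assms(4) unfolding Hc_def by blast
  show "{j. j \<in> {1..<k} \<and> {s k, s j} \<in> Hc s l c} \<subseteq> c k"
  proof
    fix j assume "j \<in> {j. j \<in> {1..<k} \<and> {s k, s j} \<in> Hc s l c}"
    then have j: "1 \<le> j" "j < k" and e: "{s k, s j} \<in> Hc s l c" by auto
    have kl: "3 \<le> k" "k \<le> l" using assms(4) by auto
    have eq: "a \<in> {1..l} \<Longrightarrow> b \<in> {1..l} \<Longrightarrow> s a = s b \<Longrightarrow> a = b" for a b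
      using inj unfolding inj_on_def by blast
    from e consider "{s k, s j} = {s 1, s 2}" | k' j' where "k' \<in> {3..l}" "j' \<in> c k'" "{s k, s j} = {s k', s j'}"
      unfolding Hc_def by auto
    then show "j \<in> c k"
    proof cases
      case 1
      then have "s k = s 1 \<or> s k = s 2" by (metis doubleton_eq_iff)
      then show ?thesis using eq[of k 1] eq[of k 2] kl by auto
    next
      case 2
      have j': "1 \<le> j'" "j' < k'" using ck[OF 2(1)] 2(2) by auto
      have k': "3 \<le> k'" "k' \<le> l" using 2(1) by auto
      from 2(3) have "(s k = s k' \<and> s j = s j') \<or> (s k = s j' \<and> s j = s k')" by (metis doubleton_eq_iff)
      then show ?thesis
      proof
        assume a: "s k = s k' \<and> s j = s j'"
        then have "k = k'" "j = j'" using eq[of k k'] eq[of j j'] kl k' j j' by auto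
        then show ?thesis using 2 by simp
      next
        assume a: "s k = s j' \<and> s j = s k'"
        then have "k = j'" "j = k'" using eq[of k j'] eq[of j k'] kl k' j j' by auto
        then show ?thesis using j j' by simp
      qed
    qed
  qed
qed

lemma Hc_inj:
  assumes "bij_betw s {1..l} S" "3 \<le> l"
  shows "inj_on (Hc s l) (Idx l)"
proof (rule inj_onI)
  fix c c' assume c: "c \<in> Idx l" and c': "c' \<in> Idx l" and h: "Hc s l c = Hc s l c'"
  show "c = c'"
  proof
    fix k show "c k = c' k"
    proof (cases "k \<in> {3..l}")
      case True
      have e1: "c k = {j. j \<in> {1..<k} \<and> {s k, s j} \<in> Hc s l c}" by (rule Hc_recover[OF assms(1) c assms(2) True])
      have e2: "c' k = {j. j \<in> {1..<k} \<and> {s k, s j} \<in> Hc s l c'}" by (rule Hc_recover[OF assms(1) c' assms(2) True])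
      show ?thesis unfolding e1 e2 h ..
    next
      case False
      have "c k = undefined" "c' k = undefined"
        using PiE_arb[OF c[unfolded Idx_def] False] PiE_arb[OF c'[unfolded Idx_def] False] by auto
      then show ?thesis by simp
    qed
  qed
qed

lemma card_Idx: "card (Idx l) = (\<Prod>k\<in>{3..l}. (k - 1) choose 2)"
  unfolding Idx_def by (simp add: card_PiE n_subsets)

lemma Hc_span:
  assumes "bij_betw s {1..l} S" "c \<in> Idx l" "3 \<le> l"
  shows "k4_closure (Hc s l c) = clique_edges S"
proof
  show "k4_closure (Hc s l c) \<subseteq> clique_edges S" by (rule closure_in_clique[OF Hc_sub[OF assms]])
  have inj: "inj_on s {1..l}" and im: "s ` {1..l} = S" using assms(1) unfolding bij_betw_def by auto
  have eq: "a \<in> {1..l} \<Longrightarrow> b \<in> {1..l} \<Longrightarrow> s a = s b \<Longrightarrow> a = b" for a b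
    using inj unfolding inj_on_def by blast
  let ?Cl = "k4_closure (Hc s l c)"
  have main: "2 \<le> k \<Longrightarrow> k \<le> l \<Longrightarrow> clique_edges (s ` {1..k}) \<subseteq> ?Cl" for k
  proof (induction k rule: dec_induct)
    case base
    show ?case
    proof
      fix e assume "e \<in> clique_edges (s ` {1..2})"
      moreover have "{1..2::nat} = {1,2}" by auto
      ultimately have "e \<subseteq> {s 1, s 2}" "card e = 2" unfolding clique_edges_def by auto
      moreover have "card {s 1, s 2} \<le> 2" by (simp add: card_insert_le_m1)
      ultimately have "e = {s 1, s 2}" by (metis card_seteq finite.emptyI finite.insertI)
      then show "e \<in> ?Cl" by (simp add: Hc_def k4_closure.base)
    qed
  next
    case (step k)
    have k1: "Suc k \<in> {3..l}" using step by auto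
    have T: "c (Suc k) \<subseteq> {1..<Suc k}" "card (c (Suc k)) = 2" using assms(2) k1 unfolding Idx_def by auto
    then obtain a b where ab: "c (Suc k) = {a,b}" "a \<noteq> b" by (meson card_2_iff)
    have abk: "a \<in> {1..k}" "b \<in> {1..k}" using T ab by auto
    have baseE: "j \<in> c (Suc k) \<Longrightarrow> {s (Suc k), s j} \<in> ?Cl" for j
      using k1 by (intro k4_closure.base) (auto simp: Hc_def)
    have IH: "x \<in> {1..k} \<Longrightarrow> y \<in> {1..k} \<Longrightarrow> x \<noteq> y \<Longrightarrow> {s x, s y} \<in> ?Cl" for x y
    proof -
      assume xy: "x \<in> {1..k}" "y \<in> {1..k}" "x \<noteq> y"
      then have "s x \<noteq> s y" using eq[of x y] step by auto
      then have "{s x, s y} \<in> clique_edges (s ` {1..k})" unfolding clique_edges_def using xy by auto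
      then show ?thesis using step.IH step by auto
    qed
    have new: "j \<in> {1..k} \<Longrightarrow> {s (Suc k), s j} \<in> ?Cl" for j
    proof -
      assume j: "j \<in> {1..k}"
      show ?thesis
      proof (cases "j \<in> c (Suc k)")
        case True then show ?thesis using baseE by simp
      next
        case False
        then have ja: "j \<noteq> a" "j \<noteq> b" using ab by auto
        have dd: "distinct [Suc k, j, a, b]" using ja ab abk j by auto
        have sub: "set [Suc k, j, a, b] \<subseteq> {1..l}" using j abk step by auto
        have "distinct (map s [Suc k, j, a, b])"
          using dd inj_on_subset[OF inj sub] by (simp only: distinct_map)
        then have dist: "distinct [s (Suc k), s j, s a, s b]" by simp
        have a1: "{s (Suc k), s a} \<in> ?Cl" by (rule baseE) (simp add: ab(1))
        have b1: "{s (Suc k), s b} \<in> ?Cl" by (rule baseE) (simp add: ab(1))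
        show ?thesis
          by (rule k4_closure.step[OF dist a1 b1 IH[OF j abk(1) ja(1)] IH[OF j abk(2) ja(2)] IH[OF abk ab(2)]])
      qed
    qed
    show ?case
    proof
      fix e assume "e \<in> clique_edges (s ` {1..Suc k})"
      then have e: "e \<subseteq> s ` {1..Suc k}" "card e = 2" unfolding clique_edges_def by auto
      then obtain x y where xy: "e = {x,y}" "x \<noteq> y" by (meson card_2_iff)
      then obtain i i' where ii: "i \<in> {1..Suc k}" "i' \<in> {1..Suc k}" "x = s i" "y = s i'" using e by auto
      have "i \<noteq> i'" using ii xy by auto
      have r: "t \<in> {1..Suc k} \<Longrightarrow> t \<noteq> Suc k \<Longrightarrow> t \<in> {1..k}" for t by auto
      show "e \<in> ?Cl"
      proof (cases "i = Suc k")
        case True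
        then have i': "i' \<in> {1..k}" using r[OF ii(2)] \<open>i \<noteq> i'\<close> by simp
        show ?thesis using new[OF i'] xy(1) ii(3,4) True by simp
      next
        case False
        then have i: "i \<in> {1..k}" using r[OF ii(1)] by simp
        show ?thesis
        proof (cases "i' = Suc k")
          case True
          show ?thesis using new[OF i] xy(1) ii(3,4) True by (simp add: insert_commute)
        next
          case False
          then have i': "i' \<in> {1..k}" using r[OF ii(2)] by simp
          show ?thesis using IH[OF i i' \<open>i \<noteq> i'\<close>] xy(1) ii(3,4) by simp
        qed
      qed
    qed
  qed
  have "clique_edges (s ` {1..l}) \<subseteq> ?Cl" using main[of l] assms(3) by simp
  then show "clique_edges S \<subseteq> ?Cl" using im by simp
qed

lemma two_choose: "2 * (l choose 2) = l * (l - 1)"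
proof -
  have "even (l * (l - 1))" by (cases l) auto
  then show ?thesis by (simp add: choose_two)
qed

lemma succ_pow_le: "(real n + 1) ^ n \<le> exp 1 * real n ^ n"
proof (cases "n = 0")
  case True then show ?thesis by simp
next
  case False
  then have np: "real n > 0" by simp
  have "(real n + 1) ^ n = real n ^ n * (1 + 1 / real n) ^ n"
    using np by (simp add: power_mult_distrib[symmetric] field_simps)
  also have "(1 + 1 / real n) ^ n \<le> exp (1 / real n) ^ n"
    by (rule power_mono) (use np in auto)
  also have "exp (1 / real n) ^ n = exp 1"
    using np by (simp add: exp_of_nat_mult[symmetric])
  finally show ?thesis using np by (simp add: mult.commute mult_left_mono)
qed

lemma fact_lower: "real n ^ n \<le> exp 1 ^ n * fact n"
proof (induction n)
  case 0 then show ?case by simp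
next
  case (Suc n)
  have "real (Suc n) ^ Suc n = (real n + 1) * (real n + 1) ^ n" by (simp add: add.commute)
  also have "\<dots> \<le> (real n + 1) * (exp 1 * real n ^ n)"
    by (rule mult_left_mono[OF succ_pow_le]) simp
  also have "\<dots> \<le> (real n + 1) * (exp 1 * (exp 1 ^ n * fact n))"
    by (intro mult_left_mono Suc.IH) auto
  also have "\<dots> = exp 1 ^ Suc n * fact (Suc n)" by (simp add: algebra_simps)
  finally show ?case .
qed

lemma prod_choose:
  assumes "2 \<le> l"
  shows "2 ^ (l - 2) * (\<Prod>k\<in>{3..l}. (k - 1) choose 2) = fact (l - 1) * (fact (l - 2) :: nat)"
  using assms
proof (induction l rule: dec_induct)
  case base then show ?case by simp
next
  case (step l)
  obtain k where lk: "l = Suc (Suc k)" using step(1) by (intro that[of "l - 2"]) simp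
  have set: "{3..Suc l} = insert (Suc l) {3..l}" using step by auto
  have ch: "2 * (l choose 2) = l * (l - 1)" by (simp add: two_choose)
  have f1: "fact l = l * fact (l - 1)" unfolding lk by simp
  have f2: "fact (l - 1) = (l - 1) * (fact (l - 2) :: nat)" unfolding lk by simp
  have "2 ^ (Suc l - 2) * (\<Prod>k\<in>{3..Suc l}. (k - 1) choose 2)
      = 2 * (l choose 2) * (2 ^ (l - 2) * (\<Prod>k\<in>{3..l}. (k - 1) choose 2))"
    unfolding set using step by (simp add: lk)
  also have "\<dots> = l * (l - 1) * (fact (l - 1) * fact (l - 2))" using step.IH ch by simp
  also have "\<dots> = fact (Suc l - 1) * fact (Suc l - 2)" using f1 f2 by simp
  finally show ?case .
qed

lemma lower_numeric:
  fixes l :: nat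
  assumes "3 \<le> l"
  shows "4 * real l ^ (2 * l - 3) \<le> real (\<Prod>k\<in>{3..l}. (k - 1) choose 2) * (2 * exp 1 ^ 2) ^ l"
proof -
  obtain k where lk: "l = Suc (Suc k)" using assms by (intro that[of "l - 2"]) simp
  define A where "A = real (fact (l - 1) * fact (l - 2) :: nat)"
  have eqn: "real (2 ^ (l - 2) * (\<Prod>k\<in>{3..l}. (k - 1) choose 2)) = A"
    unfolding A_def by (rule arg_cong[where f=real, OF prod_choose]) (use assms in simp)
  have aA: "real (\<Prod>k\<in>{3..l}. (k - 1) choose 2) * 2 ^ (l - 2) = A"
    using eqn by (simp add: mult.commute)
  have A2: "A = fact (Suc k) * fact k" unfolding A_def lk by (simp del: fact_Suc)
  have fl: "(fact l :: real) = real l * fact (Suc k)" unfolding lk by (rule fact_Suc)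
  have fk: "(fact (Suc k) :: real) = real (Suc k) * fact k" by simp
  have Apos: "A \<ge> 0" unfolding A_def by simp
  have "(fact l :: real) ^ 2 = (real l * fact (Suc k)) * (real l * (real (Suc k) * fact k))"
    unfolding power2_eq_square using fl fk by simp
  also have "\<dots> = real l * real l * real (Suc k) * A" unfolding A2 by (simp add: algebra_simps)
  also have "\<dots> \<le> real l * real l * real l * A"
    using Apos by (intro mult_right_mono mult_left_mono) (auto simp: lk)
  also have "\<dots> = real l ^ 3 * A" by (simp add: power3_eq_cube)
  finally have f2: "(fact l :: real) ^ 2 \<le> real l ^ 3 * A" .
  have "real l ^ l \<le> exp 1 ^ l * fact l" by (rule fact_lower)
  then have "(real l ^ l) ^ 2 \<le> (exp 1 ^ l * fact l) ^ 2" by (rule power_mono) simp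
  also have "\<dots> = (exp 1 ^ l) ^ 2 * fact l ^ 2" by (rule power_mult_distrib)
  also have "\<dots> \<le> (exp 1 ^ l) ^ 2 * (real l ^ 3 * A)" using f2 by (intro mult_left_mono) auto
  finally have h0: "(real l ^ l) ^ 2 \<le> (exp 1 ^ l) ^ 2 * (real l ^ 3 * A)" .
  have e1: "3 + (2 * l - 3) = l * 2" using assms by simp
  have "(real l ^ l) ^ 2 = real l ^ (l * 2)" by (rule power_mult[symmetric])
  also have "\<dots> = real l ^ 3 * real l ^ (2 * l - 3)" unfolding e1[symmetric] by (rule power_add)
  finally have h1: "(real l ^ l) ^ 2 = real l ^ 3 * real l ^ (2 * l - 3)" .
  have ee: "(exp 1 ^ l) ^ 2 = (exp 1 :: real) ^ (2 * l)" by (simp add: power_mult[symmetric] mult.commute)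
  have h: "real l ^ 3 * real l ^ (2 * l - 3) \<le> real l ^ 3 * (exp 1 ^ (2 * l) * A)"
    using h0 unfolding h1 ee by (simp add: algebra_simps)
  have lpos: "real l ^ 3 > 0" using assms by simp
  have h2: "real l ^ (2 * l - 3) \<le> exp 1 ^ (2 * l) * A" using h lpos by simp
  have p2: "(2::real) ^ l = 4 * 2 ^ (l - 2)" unfolding lk by simp
  have "(2 * exp 1 ^ 2 :: real) ^ l = 2 ^ l * (exp 1 ^ 2) ^ l" by (rule power_mult_distrib)
  also have "\<dots> = 4 * 2 ^ (l - 2) * exp 1 ^ (2 * l)" unfolding p2 by (simp add: power_mult[symmetric])
  finally have p3: "(2 * exp 1 ^ 2 :: real) ^ l = 4 * 2 ^ (l - 2) * exp 1 ^ (2 * l)" .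
  have "real (\<Prod>k\<in>{3..l}. (k - 1) choose 2) * (2 * exp 1 ^ 2) ^ l
      = 4 * exp 1 ^ (2 * l) * (real (\<Prod>k\<in>{3..l}. (k - 1) choose 2) * 2 ^ (l - 2))"
    unfolding p3 by (simp add: algebra_simps)
  also have "\<dots> = 4 * exp 1 ^ (2 * l) * A" unfolding aA ..
  finally show ?thesis using h2 by simp
qed

lemma upper_numeric:
  fixes l :: nat
  assumes "3 \<le> l"
  shows "real ((l choose 2) choose (2 * l - 3)) \<le> 4 ^ 3 * (exp 1 / 4) ^ (2 * l) * real l ^ (2 * l - 3)"
proof -
  define m where "m = 2 * l - 3"
  define N where "N = l choose 2"
  have mpos: "m \<ge> 3" using assms unfolding m_def by simp
  have Nr: "real N = real l * (real m + 1) / 4"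
  proof -
    have "2 * N = l * (l - 1)" unfolding N_def by (simp add: two_choose)
    then have "real (2 * N) = real (l * (l - 1))" by (simp only:)
    then have "2 * real N = real l * (real l - 1)" using assms by (simp add: of_nat_diff)
    moreover have "real m = 2 * real l - 3" unfolding m_def using assms by (simp add: of_nat_diff)
    ultimately have h1: "2 * real N = real l * (real l - 1)" and h2: "real m = 2 * real l - 3" by auto
    have "real N * 4 = 2 * (2 * real N)" by simp
    also have "\<dots> = 2 * (real l * (real l - 1))" using h1 by simp
    also have "\<dots> = real l * (real m + 1)" unfolding h2 by (simp add: algebra_simps)
    finally show ?thesis by simp
  qed
  have b: "real (N choose m) * fact m \<le> real N ^ m"
    using binomial_fact_pow[of N m] by (metis of_nat_fact of_nat_le_iff of_nat_mult of_nat_power)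
  have fm: "real m ^ m \<le> exp 1 ^ m * fact m" by (rule fact_lower)
  have sp: "(real m + 1) ^ m \<le> exp 1 * real m ^ m" by (rule succ_pow_le)
  have mm: "real m ^ m > 0" using mpos by simp
  have "real (N choose m) * real m ^ m \<le> real (N choose m) * (exp 1 ^ m * fact m)"
    using fm by (intro mult_left_mono) auto
  also have "\<dots> \<le> exp 1 ^ m * real N ^ m" using b by (simp add: algebra_simps mult_left_mono)
  also have "\<dots> = exp 1 ^ m * (real l / 4) ^ m * (real m + 1) ^ m"
  proof -
    have "real N = (real l / 4) * (real m + 1)" using Nr by simp
    then show ?thesis by (simp only: power_mult_distrib mult.assoc)
  qed
  also have "\<dots> \<le> exp 1 ^ m * (real l / 4) ^ m * (exp 1 * real m ^ m)"
    using sp by (intro mult_left_mono) auto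
  finally have "real (N choose m) * real m ^ m \<le> (exp 1 * exp 1 ^ m * (real l / 4) ^ m) * real m ^ m"
    by (simp add: algebra_simps)
  then have c: "real (N choose m) \<le> exp 1 * exp 1 ^ m * (real l / 4) ^ m" using mm by simp
  have e3: "exp 1 \<le> exp (1::real) ^ 3"
  proof -
    have "1 \<le> exp (1::real) ^ 2" by (simp add: one_le_power)
    then show ?thesis by (simp add: power3_eq_cube power2_eq_square mult_le_cancel_left1 mult.assoc)
  qed
  have "exp 1 * exp 1 ^ m * (real l / 4) ^ m \<le> exp 1 ^ 3 * exp 1 ^ m * (real l / 4) ^ m"
    using e3 by (intro mult_right_mono) auto
  also have "\<dots> = 4 ^ 3 * (exp 1 / 4) ^ (2 * l) * real l ^ m"
  proof -
    have "2 * l = m + 3" unfolding m_def using assms by simp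
    then show ?thesis by (simp add: power_add power_divide field_simps power_mult_distrib)
  qed
  finally show ?thesis using c unfolding m_def N_def by simp
qed

lemma wt_nonneg: "0 \<le> p \<Longrightarrow> p \<le> 1 \<Longrightarrow> 0 \<le> wt p A H"
  unfolding wt_def by simp

lemma finite_Kn: "finite (Kn_edges n)"
  by (rule finite_subset[of _ "Pow {1..n}"]) (auto simp: Kn_edges_def)

lemma P_eq_Q:
  fixes p :: real
  assumes "S \<subseteq> {1..n}"
  shows "P_span n S p = (\<Sum>H\<in>Pow (clique_edges S). (if k4_closure H = clique_edges S then wt p (clique_edges S) H else 0))"
proof -
  let ?E = "Kn_edges n" and ?K = "clique_edges S"
  define f where "f H = (if k4_closure H = ?K then 1 else (0::real))" for H
  have KE: "?K \<subseteq> ?E" using assms unfolding Kn_edges_def clique_edges_def by auto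
  have fE: "finite ?E" by (rule finite_Kn)
  have "P_span n S p = (\<Sum>G\<in>Pow ?E. f (G \<inter> ?K) * wt p ?E G)"
    unfolding P_span_def
  proof (rule sum.cong[OF refl])
    fix G assume G: "G \<in> Pow ?E"
    have "{e \<in> G. e \<subseteq> S} = G \<inter> ?K" using G unfolding Kn_edges_def clique_edges_def by auto
    then show "(if internally_spanned G S then p ^ card G * (1 - p) ^ (card ?E - card G) else 0) = f (G \<inter> ?K) * wt p ?E G"
      unfolding internally_spanned_def f_def wt_def by simp
  qed
  also have "\<dots> = (\<Sum>H\<in>(\<lambda>G. G \<inter> ?K) ` Pow ?E. \<Sum>G\<in>{G. G \<in> Pow ?E \<and> G \<inter> ?K = H}. f (G \<inter> ?K) * wt p ?E G)"
    by (rule sum.image_gen) (use fE in simp)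
  also have "(\<lambda>G. G \<inter> ?K) ` Pow ?E = Pow ?K"
  proof
    show "Pow ?K \<subseteq> (\<lambda>G. G \<inter> ?K) ` Pow ?E"
    proof
      fix H assume "H \<in> Pow ?K"
      then have "H = H \<inter> ?K" "H \<in> Pow ?E" using KE by auto
      then show "H \<in> (\<lambda>G. G \<inter> ?K) ` Pow ?E" by blast
    qed
  qed auto
  also have "(\<Sum>H\<in>Pow ?K. \<Sum>G\<in>{G. G \<in> Pow ?E \<and> G \<inter> ?K = H}. f (G \<inter> ?K) * wt p ?E G)
      = (\<Sum>H\<in>Pow ?K. f H * wt p ?K H)"
  proof (rule sum.cong[OF refl])
    fix H assume H: "H \<in> Pow ?K"
    have "(\<Sum>G\<in>{G. G \<in> Pow ?E \<and> G \<inter> ?K = H}. f (G \<inter> ?K) * wt p ?E G)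
        = (\<Sum>G\<in>{G. G \<in> Pow ?E \<and> G \<inter> ?K = H}. f H * wt p ?E G)" by (rule sum.cong) auto
    also have "\<dots> = f H * (\<Sum>G\<in>{G \<in> Pow ?E. G \<inter> ?K = H}. wt p ?E G)" by (simp add: sum_distrib_left)
    also have "\<dots> = f H * wt p ?K H" using M[OF fE KE] H by simp
    finally show "(\<Sum>G\<in>{G. G \<in> Pow ?E \<and> G \<inter> ?K = H}. f (G \<inter> ?K) * wt p ?E G) = f H * wt p ?K H" .
  qed
  also have "\<dots> = (\<Sum>H\<in>Pow ?K. (if k4_closure H = ?K then wt p ?K H else 0))"
    by (rule sum.cong[OF refl]) (simp add: f_def)
  finally show ?thesis .
qed

lemma Q_upper:
  fixes p :: real
  assumes "finite S" "3 \<le> card S" "0 \<le> p" "p \<le> 1"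
  shows "(\<Sum>H\<in>Pow (clique_edges S). (if k4_closure H = clique_edges S then wt p (clique_edges S) H else 0))
      \<le> real ((card S choose 2) choose (2 * card S - 3)) * p ^ (2 * card S - 3)"
proof -
  let ?K = "clique_edges S"
  define m where "m = 2 * card S - 3"
  have fK: "finite ?K" unfolding clique_edges_def by (rule finite_subset[of _ "Pow S"]) (use assms(1) in auto)
  have cK: "card ?K = card S choose 2" unfolding clique_edges_def using n_subsets[OF assms(1)] by simp
  have "(\<Sum>H\<in>Pow ?K. (if k4_closure H = ?K then wt p ?K H else 0))
      \<le> (\<Sum>H\<in>Pow ?K. \<Sum>T\<in>{T. T \<in> Pow ?K \<and> (T \<subseteq> H \<and> card T = m)}. wt p ?K H)"
  proof (rule sum_mono)
    fix H assume H: "H \<in> Pow ?K"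
    have fH: "finite H" using H fK finite_subset by auto
    have nn: "0 \<le> (\<Sum>T\<in>{T. T \<in> Pow ?K \<and> (T \<subseteq> H \<and> card T = m)}. wt p ?K H)"
      by (rule sum_nonneg) (use wt_nonneg assms in auto)
    show "(if k4_closure H = ?K then wt p ?K H else 0) \<le> (\<Sum>T\<in>{T. T \<in> Pow ?K \<and> (T \<subseteq> H \<and> card T = m)}. wt p ?K H)"
    proof (cases "k4_closure H = ?K")
      case True
      have e2: "\<forall>e\<in>H. card e = 2" using H unfolding clique_edges_def by auto
      have "m \<le> card H" unfolding m_def
        by (rule edge_count[OF fH e2 order_refl _ assms(1,2)]) (use True in simp)
      then obtain T where T: "T \<subseteq> H" "card T = m" by (meson obtain_subset_with_card_n)
      have "wt p ?K H \<le> (\<Sum>T\<in>{T. T \<in> Pow ?K \<and> (T \<subseteq> H \<and> card T = m)}. wt p ?K H)"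
      proof (rule member_le_sum[where i = T and f = "\<lambda>_. wt p ?K H"])
        show "T \<in> {T. T \<in> Pow ?K \<and> (T \<subseteq> H \<and> card T = m)}" using T H by auto
        show "finite {T. T \<in> Pow ?K \<and> (T \<subseteq> H \<and> card T = m)}" using fK by simp
        show "0 \<le> wt p ?K H" using assms by (intro wt_nonneg) auto
      qed
      then show ?thesis using True by simp
    qed (use nn in simp)
  qed
  also have "\<dots> = (\<Sum>T\<in>Pow ?K. \<Sum>H\<in>{H. H \<in> Pow ?K \<and> (T \<subseteq> H \<and> card T = m)}. wt p ?K H)"
    by (rule sum.swap_restrict) (use fK in auto)
  also have "\<dots> = (\<Sum>T\<in>Pow ?K. if card T = m then p ^ m else 0)"
  proof (rule sum.cong[OF refl])
    fix T assume T: "T \<in> Pow ?K"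
    show "(\<Sum>H\<in>{H. H \<in> Pow ?K \<and> (T \<subseteq> H \<and> card T = m)}. wt p ?K H) = (if card T = m then p ^ m else 0)"
    proof (cases "card T = m")
      case True
      have "{H. H \<in> Pow ?K \<and> (T \<subseteq> H \<and> card T = m)} = {G \<in> Pow ?K. G \<inter> T = T}" using True by auto
      moreover have "(\<Sum>G\<in>{G \<in> Pow ?K. G \<inter> T = T}. wt p ?K G) = wt p T T" using M[OF fK _ order_refl] T by auto
      ultimately show ?thesis using True by (simp add: wt_def)
    qed simp
  qed
  also have "\<dots> = (\<Sum>T\<in>{T \<in> Pow ?K. card T = m}. p ^ m)"
    by (rule sum.inter_filter[symmetric]) (use fK in simp)
  also have "\<dots> = real (card {T. T \<subseteq> ?K \<and> card T = m}) * p ^ m" by (simp add: Pow_def)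
  also have "\<dots> = real ((card S choose 2) choose m) * p ^ m" using n_subsets[OF fK] cK by simp
  finally show ?thesis unfolding m_def .
qed

lemma Q_lower:
  fixes p :: real
  assumes "finite S" "3 \<le> card S" "0 < p" "p < 1" "p * (real (card S))^2 \<le> 1"
  shows "real (\<Prod>k\<in>{3..card S}. (k - 1) choose 2) * p ^ (2 * card S - 3) / 2
     \<le> (\<Sum>H\<in>Pow (clique_edges S). (if k4_closure H = clique_edges S then wt p (clique_edges S) H else 0))"
proof -
  let ?K = "clique_edges S"
  define l where "l = card S"
  define m where "m = 2 * l - 3"
  define N where "N = card ?K"
  obtain s where s: "bij_betw s {1..l} S" unfolding l_def using ex_bij_betw_nat_finite_1[OF assms(1)] by blast
  have l3: "3 \<le> l" using assms unfolding l_def by simp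
  have fK: "finite ?K" unfolding clique_edges_def by (rule finite_subset[of _ "Pow S"]) (use assms(1) in auto)
  have cK: "N = l choose 2" unfolding N_def l_def clique_edges_def using n_subsets[OF assms(1)] by simp
  let ?F = "Hc s l ` Idx l"
  have sub: "?F \<subseteq> Pow ?K" using Hc_sub[OF s _ l3] by auto
  have wn: "0 \<le> wt p ?K H" for H using assms by (intro wt_nonneg) auto
  have "(\<Sum>H\<in>?F. wt p ?K H) \<le> (\<Sum>H\<in>Pow ?K. (if k4_closure H = ?K then wt p ?K H else 0))"
  proof -
    have "(\<Sum>H\<in>?F. wt p ?K H) = (\<Sum>H\<in>?F. (if k4_closure H = ?K then wt p ?K H else 0))"
    proof (rule sum.cong[OF refl])
      fix H assume "H \<in> ?F"
      then obtain c where c: "c \<in> Idx l" "H = Hc s l c" by blast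
      then have "k4_closure H = ?K" using Hc_span[OF s c(1) l3] by simp
      then show "wt p ?K H = (if k4_closure H = ?K then wt p ?K H else 0)" by simp
    qed
    also have "\<dots> \<le> (\<Sum>H\<in>Pow ?K. (if k4_closure H = ?K then wt p ?K H else 0))"
    proof (rule sum_mono2[OF _ sub])
      show "finite (Pow ?K)" using fK by simp
      fix b show "0 \<le> (if k4_closure b = ?K then wt p ?K b else 0)" using wn by simp
    qed
    finally show ?thesis .
  qed
  moreover have "(\<Sum>H\<in>?F. p ^ m * (1 - p) ^ N) \<le> (\<Sum>H\<in>?F. wt p ?K H)"
  proof (rule sum_mono)
    fix H assume H: "H \<in> ?F"
    then obtain c where c: "c \<in> Idx l" "H = Hc s l c" by blast
    have cH: "card H \<le> m" unfolding m_def using Hc_card[OF c(1) l3] c by simp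
    have a1: "p ^ m \<le> p ^ card H" by (rule power_decreasing[OF cH]) (use assms in auto)
    have a2: "(1 - p) ^ N \<le> (1 - p) ^ (N - card H)" by (rule power_decreasing) (use assms in auto)
    have ww: "wt p ?K H = p ^ card H * (1 - p) ^ (N - card H)" unfolding wt_def N_def by simp
    have "p ^ m * (1 - p) ^ N \<le> p ^ card H * (1 - p) ^ (N - card H)"
      by (rule mult_mono[OF a1 a2]) (use assms in auto)
    then show "p ^ m * (1 - p) ^ N \<le> wt p ?K H" using ww by simp
  qed
  moreover have "card ?F = (\<Prod>k\<in>{3..l}. (k - 1) choose 2)"
    using card_image[OF Hc_inj[OF s l3]] by (simp only: card_Idx)
  moreover have "1 / 2 \<le> (1 - p) ^ N"
  proof -
    have "real N \<le> real l ^ 2 / 2"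
    proof -
      have "2 * N = l * (l - 1)" using cK two_choose by simp
      then have "real (2 * N) = real (l * (l - 1))" by (simp only:)
      then have "2 * real N = real l * real (l - 1)" by simp
      also have "\<dots> \<le> real l ^ 2" by (simp add: power2_eq_square mult_left_mono)
      finally show ?thesis by simp
    qed
    then have "real N * p \<le> real l ^ 2 / 2 * p" using assms by (intro mult_right_mono) auto
    also have "\<dots> = p * (real (card S))^2 / 2" unfolding l_def by simp
    also have "\<dots> \<le> 1 / 2" using assms(5) by simp
    finally have "real N * p \<le> 1 / 2" .
    moreover have "1 + real N * (- p) \<le> (1 + - p) ^ N" by (rule Bernoulli_inequality) (use assms in simp)
    ultimately show ?thesis by simp
  qed
  ultimately have q: "real (\<Prod>k\<in>{3..l}. (k - 1) choose 2) * (p ^ m * (1 - p) ^ N)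
     \<le> (\<Sum>H\<in>Pow ?K. (if k4_closure H = ?K then wt p ?K H else 0))"
    and h: "1 / 2 \<le> (1 - p) ^ N" by (simp_all add: sum_constant)
  have "real (\<Prod>k\<in>{3..l}. (k - 1) choose 2) * p ^ m / 2 = real (\<Prod>k\<in>{3..l}. (k - 1) choose 2) * (p ^ m * (1 / 2))" by simp
  also have "\<dots> \<le> real (\<Prod>k\<in>{3..l}. (k - 1) choose 2) * (p ^ m * (1 - p) ^ N)"
  proof (rule mult_left_mono)
    show "p ^ m * (1 / 2) \<le> p ^ m * (1 - p) ^ N" using h assms(3) by (intro mult_left_mono) auto
    show "0 \<le> real (\<Prod>k\<in>{3..l}. (k - 1) choose 2)" by (rule of_nat_0_le_iff)
  qed
  finally show ?thesis using q unfolding m_def l_def by linarith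
qed

theorem lemma4p3:
  fixes l n :: nat and p :: real and S :: "nat set"
  assumes "3 \<le> l" "l \<le> n" "0 < p" "p < 1" "p * (real l)^2 \<le> 1"
    and "S \<subseteq> {1..n}" "card S = l"
  shows "(1 / (2 * exp 1 ^ 2)) ^ l * (real l * p) ^ (2 * l - 3) \<le> P_span n S p
       \<and> P_span n S p \<le> 4 ^ 3 * (exp 1 / 4) ^ (2 * l) * (real l * p) ^ (2 * l - 3)"
proof -
  have fS: "finite S" using assms(6) finite_subset by blast
  have l3: "3 \<le> card S" using assms by simp
  have PQ: "P_span n S p = (\<Sum>H\<in>Pow (clique_edges S). (if k4_closure H = clique_edges S then wt p (clique_edges S) H else 0))"
    by (rule P_eq_Q[OF assms(6)])
  define m where "m = 2 * l - 3"
  define a where "a = real (\<Prod>k\<in>{3..l}. (k - 1) choose 2)"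
  have low: "a * p ^ m / 2 \<le> P_span n S p"
    unfolding PQ a_def m_def using Q_lower[OF fS l3 assms(3,4)] assms by simp
  have up: "P_span n S p \<le> real ((l choose 2) choose m) * p ^ m"
    unfolding PQ m_def using Q_upper[OF fS l3] assms by simp
  have ln: "4 * real l ^ m \<le> a * (2 * exp 1 ^ 2) ^ l"
    unfolding a_def m_def by (rule lower_numeric[OF assms(1)])
  have un: "real ((l choose 2) choose m) \<le> 4 ^ 3 * (exp 1 / 4) ^ (2 * l) * real l ^ m"
    unfolding m_def by (rule upper_numeric[OF assms(1)])
  have pm: "0 \<le> p ^ m" using assms by simp
  have D: "0 < (2 * exp 1 ^ 2 :: real) ^ l" by simp
  have "(1 / (2 * exp 1 ^ 2)) ^ l * (real l * p) ^ m = real l ^ m * p ^ m / (2 * exp 1 ^ 2) ^ l"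
    by (simp add: power_mult_distrib power_divide)
  also have "\<dots> \<le> (a * (2 * exp 1 ^ 2) ^ l / 4) * p ^ m / (2 * exp 1 ^ 2) ^ l"
    using ln pm D by (intro divide_right_mono mult_right_mono) auto
  also have "\<dots> = a * p ^ m / 4" using D by (simp add: field_simps)
  also have "\<dots> \<le> a * p ^ m / 2"
  proof -
    have "0 \<le> a" unfolding a_def by (rule of_nat_0_le_iff)
    then show ?thesis using pm by (simp add: divide_left_mono)
  qed
  also have "\<dots> \<le> P_span n S p" by (rule low)
  finally have L: "(1 / (2 * exp 1 ^ 2)) ^ l * (real l * p) ^ m \<le> P_span n S p" .
  have "P_span n S p \<le> real ((l choose 2) choose m) * p ^ m" by (rule up)
  also have "\<dots> \<le> 4 ^ 3 * (exp 1 / 4) ^ (2 * l) * real l ^ m * p ^ m"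
    using un pm by (rule mult_right_mono)
  also have "\<dots> = 4 ^ 3 * (exp 1 / 4) ^ (2 * l) * (real l * p) ^ m"
    by (simp add: power_mult_distrib)
  finally have U: "P_span n S p \<le> 4 ^ 3 * (exp 1 / 4) ^ (2 * l) * (real l * p) ^ m" .
  show ?thesis using L U unfolding m_def by simp
qed

end
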